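(* Assume that for every $x\in V$ the functions $s\mapsto H(x,s)$ and $s\mapsto f_l(x,s)$ ($l=1,\dots,m$) are nondecreasing. If $(u^1,\dots,u^m)$ and $(v^1,\dots,v^m)$ both solve the discrete system (S), then for every $l=1,\dots,m$, $$\{x\in V: u^l(x)>v^l(x)\}\subset\{x\in V:\hat{u}^l(x)>\hat{v}^l(x)\}\subset\{x\in V: u^l(x)\ge v^l(x)\}.$$
   Context: Let $G=(V,E)$ be a finite, connected, undirected graph with at least two vertices. For $x,y\in V$, $d(x,y)$ denotes the graph (shortest-path) distance, and $\deg(x)=|\{y\in V:(x,y)\in E\}|$. The boundary of $G$ is $$\partial G=\Big\{x\in V:\ \exists\, y\in V \text{ with } \tfrac{1}{\deg(x)}\textstyle\sum_{(x,z)\in E} d(z,y)<d(x,y)\Big\},$$ and the interior is $G^o=V\setminus\partial G$. For $r:V\to\mathbb{R}$, the mean value at $x$ is $\overline{r}(x)=\frac{1}{\deg(x)}\sum_{(x,y)\in E} r(y)$. Fix an integer $m\ge1$. Let $H:V\times[0,\infty)\to\mathbb{R}$ and $f_l:V\times[0,\infty)\to\mathbb{R}$ ($l=1,\dots,m$) be continuous in the second variable with $H(x,0)=0$ and $f_l(x,0)=0$ for all $x\in V$; they are extended to negative arguments by $H(x,s)=-H(x,-s)$ and $f_l(x,s)=-f_l(x,-s)$ for $s<0$. Let $\phi^l:\partial G\to[0,\infty)$ ($l=1,\dots,m$) be boundary data satisfying $\phi^i(x)\phi^j(x)=0$ for all $x\in\partial G$ and $i\neq j$. The discrete system (S) for $(u^1,\dots,u^m)$,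 $u^l:V\to\mathbb{R}$, is: for every $l=1,\dots,m$, $$u^l(x)=\max\Big(H\Big(x,\ \overline{u}^l(x)-\sum_{p\neq l}\overline{u}^p(x)\Big)-f_l\big(x,u^l(x)\big),\ 0\Big)\quad (x\in G^o),\qquad u^l(x)=\phi^l(x)\quad (x\in\partial G).$$ For a vector $(u^1,\dots,u^m)$ we write $\hat{u}^l(x)=u^l(x)-\sum_{p\neq l}u^p(x)$, and similarly $\hat{v}^l$. *)

theory Defs
  imports "HOL-Analysis.Analysis"
begin

definition graph_ok :: "'a set \<Rightarrow> ('a \<times> 'a) set \<Rightarrow> bool" where
  "graph_ok V E \<longleftrightarrow> finite V \<and> card V \<ge> 2 \<and> E \<subseteq> V \<times> V \<and> sym E \<and> irrefl E
     \<and> (\<forall>x\<in>V. \<forall>y\<in>V. (x, y) \<in> E\<^sup>*)"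

definition walk :: "('a \<times> 'a) set \<Rightarrow> nat \<Rightarrow> 'a \<Rightarrow> 'a \<Rightarrow> bool" where
  "walk E n x y \<longleftrightarrow> (x, y) \<in> E ^^ n"

definition gdist :: "('a \<times> 'a) set \<Rightarrow> 'a \<Rightarrow> 'a \<Rightarrow> nat" where
  "gdist E x y = (LEAST n. walk E n x y)"

definition gdeg :: "'a set \<Rightarrow> ('a \<times> 'a) set \<Rightarrow> 'a \<Rightarrow> nat" where
  "gdeg V E x = card {y \<in> V. (x, y) \<in> E}"

definition mean_val :: "'a set \<Rightarrow> ('a \<times> 'a) set \<Rightarrow> ('a \<Rightarrow> real) \<Rightarrow> 'a \<Rightarrow> real" where
  "mean_val V E r x = (\<Sum>y\<in>{y \<in> V. (x, y) \<in> E}. r y) / real (gdeg V E x)"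

definition boundary :: "'a set \<Rightarrow> ('a \<times> 'a) set \<Rightarrow> 'a set" where
  "boundary V E = {x \<in> V. \<exists>y\<in>V.
      mean_val V E (\<lambda>z. real (gdist E z y)) x < real (gdist E x y)}"

definition interior_g :: "'a set \<Rightarrow> ('a \<times> 'a) set \<Rightarrow> 'a set" where
  "interior_g V E = V - boundary V E"

definition solves_S ::
  "'a set \<Rightarrow> ('a \<times> 'a) set \<Rightarrow> nat \<Rightarrow> ('a \<Rightarrow> real \<Rightarrow> real) \<Rightarrow> (nat \<Rightarrow> 'a \<Rightarrow> real \<Rightarrow> real)
   \<Rightarrow> (nat \<Rightarrow> 'a \<Rightarrow> real) \<Rightarrow> (nat \<Rightarrow> 'a \<Rightarrow> real) \<Rightarrow> bool" where
  "solves_S V E m H f \<phi> u \<longleftrightarrow>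
     (\<forall>l\<in>{1..m}.
        (\<forall>x\<in>interior_g V E.
           u l x = max (H x (mean_val V E (u l) x - (\<Sum>p\<in>{1..m}-{l}. mean_val V E (u p) x))
                        - f l x (u l x)) 0)
      \<and> (\<forall>x\<in>boundary V E. u l x = \<phi> l x))"

definition hat :: "nat \<Rightarrow> (nat \<Rightarrow> 'a \<Rightarrow> real) \<Rightarrow> nat \<Rightarrow> 'a \<Rightarrow> real" where
  "hat m u l x = u l x - (\<Sum>p\<in>{1..m}-{l}. u p x)"

end

theory Submission
  imports Defs
begin

lemma sol_nonneg:
  assumes sol: "solves_S V E m H f \<phi> u"
    and phi_nn: "\<And>l x. l \<in> {1..m} \<Longrightarrow> x \<in> boundary V E \<Longrightarrow> \<phi> l x \<ge> 0"
    and l: "l \<in> {1..m}" and x: "x \<in> V"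
  shows "u l x \<ge> 0"
proof (cases "x \<in> boundary V E")
  case True
  then show ?thesis using sol l phi_nn unfolding solves_S_def by auto
next
  case False
  then have "x \<in> interior_g V E" using x unfolding interior_g_def by auto
  then have "u l x = max (H x (mean_val V E (u l) x - (\<Sum>p\<in>{1..m}-{l}. mean_val V E (u p) x))
                        - f l x (u l x)) 0" using sol l unfolding solves_S_def by blast
  then show ?thesis by linarith
qed

lemma mean_nonneg:
  assumes "\<And>y. y \<in> V \<Longrightarrow> r y \<ge> 0"
  shows "mean_val V E r x \<ge> 0"
  unfolding mean_val_def using assms by (auto intro!: divide_nonneg_nonneg sum_nonneg)

lemma sol_disj:
  assumes sol: "solves_S V E m H f \<phi> u"
    and phi_nn: "\<And>l x. l \<in> {1..m} \<Longrightarrow> x \<in> boundary V E \<Longrightarrow> \<phi> l x \<ge> 0"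
    and phi_disj: "\<And>i j x. i \<in> {1..m} \<Longrightarrow> j \<in> {1..m} \<Longrightarrow> i \<noteq> j \<Longrightarrow> x \<in> boundary V E
                     \<Longrightarrow> \<phi> i x * \<phi> j x = 0"
    and H0: "\<And>x. x \<in> V \<Longrightarrow> H x 0 = 0"
    and f0: "\<And>l x. l \<in> {1..m} \<Longrightarrow> x \<in> V \<Longrightarrow> f l x 0 = 0"
    and H_odd: "\<And>x s. x \<in> V \<Longrightarrow> s < 0 \<Longrightarrow> H x s = - H x (- s)"
    and H_mono: "\<And>x. x \<in> V \<Longrightarrow> mono_on {0..} (H x)"
    and f_mono: "\<And>l x. l \<in> {1..m} \<Longrightarrow> x \<in> V \<Longrightarrow> mono_on {0..} (f l x)"
    and l: "l \<in> {1..m}" and k: "k \<in> {1..m}" and lk: "l \<noteq> k" and x: "x \<in> V"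
    and pos: "u l x > 0"
  shows "u k x = 0"
proof (rule ccontr)
  assume nz: "u k x \<noteq> 0"
  have nn: "\<And>p y. p \<in> {1..m} \<Longrightarrow> y \<in> V \<Longrightarrow> u p y \<ge> 0"
    using sol_nonneg[OF sol phi_nn] by blast
  have kpos: "u k x > 0" using nn[OF k x] nz by auto
  show False
  proof (cases "x \<in> boundary V E")
    case True
    then have "u l x = \<phi> l x" "u k x = \<phi> k x" using sol l k unfolding solves_S_def by auto
    then show False using phi_disj[OF l k lk True] pos kpos by auto
  next
    case False
    then have xi: "x \<in> interior_g V E" using x unfolding interior_g_def by auto
    define M where "M p = mean_val V E (u p) x" for p
    have Mnn: "\<And>p. p \<in> {1..m} \<Longrightarrow> M p \<ge> 0" unfolding M_def
      by (rule mean_nonneg) (use nn in auto)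
    have Hneg: "\<And>a. a \<le> 0 \<Longrightarrow> H x a \<le> 0"
    proof -
      fix a :: real assume a: "a \<le> 0"
      show "H x a \<le> 0"
      proof (cases "a = 0")
        case True then show ?thesis using H0[OF x] by simp
      next
        case False
        then have "a < 0" using a by simp
        moreover have "H x 0 \<le> H x (-a)" by (rule mono_onD[OF H_mono[OF x]]) (use a in auto)
        ultimately show ?thesis using H_odd[OF x] H0[OF x] by simp
      qed
    qed
    have key: "\<And>j. j \<in> {1..m} \<Longrightarrow> u j x > 0 \<Longrightarrow> M j > (\<Sum>p\<in>{1..m}-{j}. M p)"
    proof -
      fix j assume j: "j \<in> {1..m}" and jp: "u j x > 0"
      let ?a = "M j - (\<Sum>p\<in>{1..m}-{j}. M p)"
      have eq: "u j x = max (H x ?a - f j x (u j x)) 0"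
        using sol j xi unfolding solves_S_def M_def by auto
      have fnn: "f j x (u j x) \<ge> 0"
        proof -
        have "f j x 0 \<le> f j x (u j x)" by (rule mono_onD[OF f_mono[OF j x]]) (use jp in auto)
        then show ?thesis using f0[OF j x] by simp
      qed
      have "H x ?a > 0" proof -
        have "u j x = H x ?a - f j x (u j x)" using eq jp by (simp add: max_def split: if_splits)
        then show ?thesis using jp fnn by linarith
      qed
      then have "?a > 0" using Hneg by (meson not_le)
      then show "M j > (\<Sum>p\<in>{1..m}-{j}. M p)" by simp
    qed
    have s1: "M k \<le> (\<Sum>p\<in>{1..m}-{l}. M p)"
      by (rule member_le_sum) (use k lk Mnn in auto)
    have s2: "M l \<le> (\<Sum>p\<in>{1..m}-{k}. M p)"
      by (rule member_le_sum) (use l lk Mnn in auto)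
    show False using key[OF l pos] key[OF k kpos] s1 s2 by linarith
  qed
qed

theorem mainTheorem4:
  fixes V :: "'a set" and E :: "('a \<times> 'a) set" and m :: nat
    and H :: "'a \<Rightarrow> real \<Rightarrow> real" and f :: "nat \<Rightarrow> 'a \<Rightarrow> real \<Rightarrow> real"
    and \<phi> u v :: "nat \<Rightarrow> 'a \<Rightarrow> real"
  assumes G: "graph_ok V E"
    and m: "m \<ge> 1"
    and H_cont: "\<And>x. x \<in> V \<Longrightarrow> continuous_on {0..} (H x)"
    and f_cont: "\<And>l x. l \<in> {1..m} \<Longrightarrow> x \<in> V \<Longrightarrow> continuous_on {0..} (f l x)"
    and H0: "\<And>x. x \<in> V \<Longrightarrow> H x 0 = 0"
    and f0: "\<And>l x. l \<in> {1..m} \<Longrightarrow> x \<in> V \<Longrightarrow> f l x 0 = 0"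
    and H_odd: "\<And>x s. x \<in> V \<Longrightarrow> s < 0 \<Longrightarrow> H x s = - H x (- s)"
    and f_odd: "\<And>l x s. l \<in> {1..m} \<Longrightarrow> x \<in> V \<Longrightarrow> s < 0 \<Longrightarrow> f l x s = - f l x (- s)"
    and phi_nn: "\<And>l x. l \<in> {1..m} \<Longrightarrow> x \<in> boundary V E \<Longrightarrow> \<phi> l x \<ge> 0"
    and phi_disj: "\<And>i j x. i \<in> {1..m} \<Longrightarrow> j \<in> {1..m} \<Longrightarrow> i \<noteq> j \<Longrightarrow> x \<in> boundary V E
                     \<Longrightarrow> \<phi> i x * \<phi> j x = 0"
    and H_mono: "\<And>x. x \<in> V \<Longrightarrow> mono_on {0..} (H x)"
    and f_mono: "\<And>l x. l \<in> {1..m} \<Longrightarrow> x \<in> V \<Longrightarrow> mono_on {0..} (f l x)"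
    and u_sol: "solves_S V E m H f \<phi> u"
    and v_sol: "solves_S V E m H f \<phi> v"
    and l: "l \<in> {1..m}"
  shows "{x \<in> V. u l x > v l x} \<subseteq> {x \<in> V. hat m u l x > hat m v l x}
       \<and> {x \<in> V. hat m u l x > hat m v l x} \<subseteq> {x \<in> V. u l x \<ge> v l x}"
proof -
  have gen: "\<And>w x. solves_S V E m H f \<phi> w \<Longrightarrow> x \<in> V \<Longrightarrow>
      hat m w l x \<le> w l x \<and> (w l x > 0 \<longrightarrow> hat m w l x = w l x)"
  proof -
    fix w x assume ws: "solves_S V E m H f \<phi> w" and x: "x \<in> V"
    have nn: "\<And>p. p \<in> {1..m} \<Longrightarrow> w p x \<ge> 0" using sol_nonneg[OF ws phi_nn _ x] by blast
    have "(\<Sum>p\<in>{1..m}-{l}. w p x) \<ge> 0" by (rule sum_nonneg) (use nn in auto)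
    moreover have "w l x > 0 \<longrightarrow> (\<Sum>p\<in>{1..m}-{l}. w p x) = 0"
    proof
      assume "w l x > 0"
      then show "(\<Sum>p\<in>{1..m}-{l}. w p x) = 0"
        using sol_disj[OF ws phi_nn phi_disj H0 f0 H_odd H_mono f_mono l _ _ x]
        by (intro sum.neutral) auto
    qed
    ultimately show "hat m w l x \<le> w l x \<and> (w l x > 0 \<longrightarrow> hat m w l x = w l x)"
      unfolding hat_def by auto
  qed
  have nnu: "\<And>x. x \<in> V \<Longrightarrow> u l x \<ge> 0" using sol_nonneg[OF u_sol phi_nn l] .
  have nnv: "\<And>x. x \<in> V \<Longrightarrow> v l x \<ge> 0" using sol_nonneg[OF v_sol phi_nn l] .
  show ?thesis
  proof (intro conjI subsetI)
    fix x assume "x \<in> {x \<in> V. u l x > v l x}"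
    then have x: "x \<in> V" and lt: "u l x > v l x" by auto
    then have "u l x > 0" using nnv[OF x] by linarith
    then show "x \<in> {x \<in> V. hat m u l x > hat m v l x}"
      using gen[OF u_sol x] gen[OF v_sol x] lt x by auto
  next
    fix x assume "x \<in> {x \<in> V. hat m u l x > hat m v l x}"
    then have x: "x \<in> V" and lt: "hat m u l x > hat m v l x" by auto
    show "x \<in> {x \<in> V. u l x \<ge> v l x}"
    proof (rule ccontr)
      assume "x \<notin> {x \<in> V. u l x \<ge> v l x}"
      then have "u l x < v l x" using x by auto
      then have "v l x > 0" using nnu[OF x] by linarith
      then show False using gen[OF u_sol x] gen[OF v_sol x] lt \<open>u l x < v l x\<close> by auto
    qed
  qed
qed

end
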